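(* Let $J\ge2$, positive integers $n_1,\dots,n_J$ with $n_l\ge 2$ and $n=\sum_l n_l$, and for each $b\ge1$ let $\tilde h_b(l,l')$, $1\le l,l'\le J$, be the quantities defined below. If $1\le j\ne j'\le J$ and $\liminf_{b\to\infty}\tilde\xi_b(j,j')>0$, then $\liminf_{b\to\infty}\tilde\tau_b(j,j')>0$.
   Context: For each $b$, there are probability distributions $\mathbf F_1,\dots,\mathbf F_J$ on $\mathbb R^d$ with a partition of the coordinates into clusters $C_1,\dots,C_b$ of sizes $d_1,\dots,d_b$; $\gamma,\phi:\mathbb R^+\to\mathbb R^+$ continuous increasing with $\gamma(0)=\phi(0)=0$. For independent $\mathbf U\sim\mathbf F_l$, $\mathbf V\sim\mathbf F_{l'}$ with sub-vectors $\mathbf U_i,\mathbf V_i$ on $C_i$, $\tilde h_b(l,l')=\phi\big[b^{-1}\sum_{i=1}^b\mathrm E\gamma(d_i^{-1}\|\mathbf U_i-\mathbf V_i\|^2)\big]$ (assumed finite); note $\tilde h_b(l,l')=\tilde h_b(l',l)$. $\tilde\xi_b(j,j')=\tilde h_b(j,j')-\frac12[\tilde h_b(j,j)+\tilde h_b(j',j')]$ and $\tilde\tau_b(j,j')=\sum_{1\le l\ne j'\le J}\frac{n_l}{n-1}|\tilde h_b(j',l)-\tilde h_b(j,l)|+\frac{n_{j'}-1}{n-1}|\tilde h_b(j',j')-\tilde h_b(j,j')|$. *)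

theory Defs
  imports "HOL-Probability.Probability"
begin

text \<open>Vectors of R^d are modelled as functions nat => real; only coordinates < d matter.
  The normalised squared distance on a cluster C: (card C)^{-1} * ||u_C - v_C||^2.\<close>
definition clust_sqdist :: "nat set \<Rightarrow> (nat \<Rightarrow> real) \<Rightarrow> (nat \<Rightarrow> real) \<Rightarrow> real" where
  "clust_sqdist C u v = (\<Sum>k\<in>C. (u k - v k)^2) / real (card C)"

definition htilde ::
  "(real \<Rightarrow> real) \<Rightarrow> (real \<Rightarrow> real) \<Rightarrow> nat \<Rightarrow> (nat \<Rightarrow> nat set)
    \<Rightarrow> (nat \<Rightarrow> real) measure \<Rightarrow> (nat \<Rightarrow> real) measure \<Rightarrow> real" where
  "htilde \<phi> \<gamma> b C P Q =
     \<phi> ((1 / real b) * (\<Sum>i\<in>{1..b}.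
        \<integral>w. \<gamma> (clust_sqdist (C i) (fst w) (snd w)) \<partial>(P \<Otimes>\<^sub>M Q)))"

definition xi_t :: "(nat \<Rightarrow> nat \<Rightarrow> real) \<Rightarrow> nat \<Rightarrow> nat \<Rightarrow> real" where
  "xi_t H j j' = H j j' - (H j j + H j' j') / 2"

definition tau_t :: "nat \<Rightarrow> (nat \<Rightarrow> nat) \<Rightarrow> (nat \<Rightarrow> nat \<Rightarrow> real) \<Rightarrow> nat \<Rightarrow> nat \<Rightarrow> real" where
  "tau_t J ns H j j' =
     (let n = (\<Sum>l\<in>{1..J}. ns l) in
      (\<Sum>l\<in>{1..J} - {j'}. real (ns l) / (real n - 1) * \<bar>H j' l - H j l\<bar>)
      + (real (ns j') - 1) / (real n - 1) * \<bar>H j' j' - H j j'\<bar>)"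

end

theory Submission
  imports Defs
begin


lemma htilde_sym:
  fixes \<gamma> :: "real \<Rightarrow> real"
  assumes P: "prob_space P" and Q: "prob_space Q"
    and int: "integrable (Q \<Otimes>\<^sub>M P) (\<lambda>w. \<gamma> (clust_sqdist C (fst w) (snd w)))"
  shows "(\<integral>w. \<gamma> (clust_sqdist C (fst w) (snd w)) \<partial>(P \<Otimes>\<^sub>M Q))
       = (\<integral>w. \<gamma> (clust_sqdist C (fst w) (snd w)) \<partial>(Q \<Otimes>\<^sub>M P))"
proof -
  interpret pair_sigma_finite Q P
    using P Q by (simp add: pair_sigma_finite_def prob_space_imp_sigma_finite)
  have sym: "clust_sqdist C u v = clust_sqdist C v u" for u v
    unfolding clust_sqdist_def by (simp add: power2_commute)
  have "(\<integral>(x,y). \<gamma> (clust_sqdist C y x) \<partial>(P \<Otimes>\<^sub>M Q))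
       = (\<integral>w. \<gamma> (clust_sqdist C (fst w) (snd w)) \<partial>(Q \<Otimes>\<^sub>M P))"
    using integral_product_swap[of "\<lambda>w. \<gamma> (clust_sqdist C (fst w) (snd w))", OF borel_measurable_integrable[OF int]] by simp
  moreover have "(\<lambda>(x,y). \<gamma> (clust_sqdist C y x))
      = (\<lambda>w. \<gamma> (clust_sqdist C (fst w) (snd w)))"
    by (auto simp: sym)
  ultimately show ?thesis by simp
qed

lemma tau_ge:
  fixes H :: "nat \<Rightarrow> nat \<Rightarrow> real"
  assumes J2: "J \<ge> 2" and ns2: "\<And>l. l \<in> {1..J} \<Longrightarrow> ns l \<ge> 2"
    and jJ: "j \<in> {1..J}" and j'J: "j' \<in> {1..J}" and jj': "j \<noteq> j'"
    and symm: "H j j' = H j' j"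
  shows "tau_t J ns H j j' \<ge> 2 / (real (\<Sum>l\<in>{1..J}. ns l) - 1) * xi_t H j j'"
proof -
  define n where "n = (\<Sum>l\<in>{1..J}. ns l)"
  have "ns j + ns j' = (\<Sum>l\<in>{j,j'}. ns l)" using jj' by simp
  also have "\<dots> \<le> n" unfolding n_def by (rule sum_mono2) (use jJ j'J in auto)
  finally have n4: "real n \<ge> 4" using ns2[OF jJ] ns2[OF j'J] by linarith
  have nj: "real (ns j) \<ge> 2" "real (ns j') \<ge> 2" using ns2[OF jJ] ns2[OF j'J] by auto
  define A where "A = \<bar>H j' j - H j j\<bar>"
  define B where "B = \<bar>H j' j' - H j j'\<bar>"
  have "(\<Sum>l\<in>{1..J} - {j'}. real (ns l) / (real n - 1) * \<bar>H j' l - H j l\<bar>)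
        \<ge> (\<Sum>l\<in>{j}. real (ns l) / (real n - 1) * \<bar>H j' l - H j l\<bar>)"
    by (rule sum_mono2) (use jJ jj' n4 in auto)
  also have "(\<Sum>l\<in>{j}. real (ns l) / (real n - 1) * \<bar>H j' l - H j l\<bar>) = real (ns j) / (real n - 1) * A"
    by (simp add: A_def)
  also have "real (ns j) / (real n - 1) * A \<ge> 1 / (real n - 1) * A"
    using nj n4 by (intro mult_right_mono divide_right_mono) (auto simp: A_def)
  finally have s1: "(\<Sum>l\<in>{1..J} - {j'}. real (ns l) / (real n - 1) * \<bar>H j' l - H j l\<bar>) \<ge> 1 / (real n - 1) * A" .
  have s2: "(real (ns j') - 1) / (real n - 1) * B \<ge> 1 / (real n - 1) * B"
    using nj n4 by (intro mult_right_mono divide_right_mono) (auto simp: B_def)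
  have "tau_t J ns H j j' \<ge> 1 / (real n - 1) * (A + B)"
    using s1 s2 unfolding tau_t_def Let_def n_def[symmetric] B_def[symmetric]
    by (simp add: distrib_left)
  moreover have "A + B \<ge> 2 * xi_t H j j'"
    unfolding A_def B_def xi_t_def using symm abs_ge_self[of "H j' j - H j j"] abs_ge_minus_self[of "H j' j' - H j j'"] by (simp add: field_simps)
  moreover have "1 / (real n - 1) * (A + B) \<ge> 1 / (real n - 1) * (2 * xi_t H j j')"
    using calculation(2) n4 by (intro mult_left_mono) auto
  ultimately show ?thesis unfolding n_def by simp
qed

theorem lemmaA1:
  fixes J :: nat and ns :: "nat \<Rightarrow> nat"
    and d :: "nat \<Rightarrow> nat" and C :: "nat \<Rightarrow> nat \<Rightarrow> nat set"
    and F :: "nat \<Rightarrow> nat \<Rightarrow> (nat \<Rightarrow> real) measure"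
    and \<gamma> \<phi> :: "real \<Rightarrow> real" and j j' :: nat
  assumes J2: "J \<ge> 2"
    and ns2: "\<And>l. l \<in> {1..J} \<Longrightarrow> ns l \<ge> 2"
    and F_prob: "\<And>b l. b \<ge> 1 \<Longrightarrow> l \<in> {1..J} \<Longrightarrow> prob_space (F b l)"
    and F_sets: "\<And>b l. b \<ge> 1 \<Longrightarrow> l \<in> {1..J} \<Longrightarrow>
                   sets (F b l) = sets (Pi\<^sub>M UNIV (\<lambda>_. borel))"
    and C_nonempty: "\<And>b i. b \<ge> 1 \<Longrightarrow> i \<in> {1..b} \<Longrightarrow> C b i \<noteq> {}"
    and C_disj: "\<And>b i i'. b \<ge> 1 \<Longrightarrow> i \<in> {1..b} \<Longrightarrow> i' \<in> {1..b} \<Longrightarrow> i \<noteq> i' \<Longrightarrow>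
                   C b i \<inter> C b i' = {}"
    and C_cover: "\<And>b. b \<ge> 1 \<Longrightarrow> (\<Union>i\<in>{1..b}. C b i) = {..<d b}"
    and \<gamma>_cont: "continuous_on {0..} \<gamma>" and \<gamma>_mono: "mono_on {0..} \<gamma>"
    and \<gamma>_0: "\<gamma> 0 = 0" and \<gamma>_nonneg: "\<And>x. x \<ge> 0 \<Longrightarrow> \<gamma> x \<ge> 0"
    and \<phi>_cont: "continuous_on {0..} \<phi>" and \<phi>_mono: "mono_on {0..} \<phi>"
    and \<phi>_0: "\<phi> 0 = 0" and \<phi>_nonneg: "\<And>x. x \<ge> 0 \<Longrightarrow> \<phi> x \<ge> 0"
    and finite_E: "\<And>b l l' i. b \<ge> 1 \<Longrightarrow> l \<in> {1..J} \<Longrightarrow> l' \<in> {1..J} \<Longrightarrow> i \<in> {1..b} \<Longrightarrow>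
        integrable (F b l \<Otimes>\<^sub>M F b l') (\<lambda>w. \<gamma> (clust_sqdist (C b i) (fst w) (snd w)))"
    and jJ: "j \<in> {1..J}" and j'J: "j' \<in> {1..J}" and jj': "j \<noteq> j'"
    and xi_pos: "liminf (\<lambda>b. ereal (xi_t (\<lambda>l l'. htilde \<phi> \<gamma> b (C b) (F b l) (F b l')) j j')) > 0"
  shows "liminf (\<lambda>b. ereal (tau_t J ns (\<lambda>l l'. htilde \<phi> \<gamma> b (C b) (F b l) (F b l')) j j')) > 0"
proof -
  define H where "H b = (\<lambda>l l'. htilde \<phi> \<gamma> b (C b) (F b l) (F b l'))" for b
  define c where "c = 2 / (real (\<Sum>l\<in>{1..J}. ns l) - 1)"
  have "ns j + ns j' = (\<Sum>l\<in>{j,j'}. ns l)" using jj' by simp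
  also have "\<dots> \<le> (\<Sum>l\<in>{1..J}. ns l)" by (rule sum_mono2) (use jJ j'J in auto)
  finally have "real (\<Sum>l\<in>{1..J}. ns l) \<ge> 4" using ns2[OF jJ] ns2[OF j'J] by linarith
  hence c0: "c > 0" unfolding c_def by simp
  have ge: "tau_t J ns (H b) j j' \<ge> c * xi_t (H b) j j'" if b1: "b \<ge> 1" for b
  proof -
    have "H b j j' = H b j' j"
      unfolding H_def htilde_def
      using htilde_sym[OF F_prob[OF b1 jJ] F_prob[OF b1 j'J] finite_E[OF b1 j'J jJ]]
      by simp
    thus ?thesis unfolding c_def using tau_ge[of J ns j j' "H b"] J2 ns2 jJ j'J jj' by blast
  qed
  let ?L = "liminf (\<lambda>b. ereal (xi_t (H b) j j'))"
  have L0: "0 < ?L" using xi_pos unfolding H_def by simp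
  obtain y where y0: "0 < y" and yL: "y < ?L" using dense[OF L0] by blast
  obtain r where yr: "y = ereal r" using y0 yL by (cases y) auto
  have r0: "r > 0" using y0 yr by simp
  have ev: "eventually (\<lambda>b. y < ereal (xi_t (H b) j j')) sequentially"
    using yL by (simp add: less_LiminfD)
  have "ereal (c * r) \<le> liminf (\<lambda>b. ereal (tau_t J ns (H b) j j'))"
  proof (subst le_Liminf_iff, intro allI impI)
    fix z assume z: "z < ereal (c * r)"
    have "eventually (\<lambda>b. b \<ge> 1 \<and> y < ereal (xi_t (H b) j j')) sequentially"
      using ev eventually_ge_at_top[of 1] by eventually_elim auto
    thus "eventually (\<lambda>b. z < ereal (tau_t J ns (H b) j j')) sequentially"
    proof eventually_elim
      case (elim b)
      hence "r < xi_t (H b) j j'" using yr by simp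
      hence "c * r < c * xi_t (H b) j j'" using c0 by simp
      also have "\<dots> \<le> tau_t J ns (H b) j j'" using ge elim by simp
      finally have "ereal (c * r) < ereal (tau_t J ns (H b) j j')" by simp
      thus ?case using z by (rule less_trans[rotated])
    qed
  qed
  moreover have "0 < ereal (c * r)" using c0 r0 by simp
  ultimately show ?thesis unfolding H_def by (meson less_le_trans)
qed

end
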